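(* In the shifted geometric model with $N\ge 2$ total observations and $0<p<1$, with $\hat p_{\mathrm{ml}}=1/(\bar{\bar X}-a+1)$ and $\hat p_{\mathrm b}=\frac{N-1}{N}\hat p_{\mathrm{ml}}$, $$E(\hat p_{\mathrm{ml}})=p\,{}_2F_1(1,1;N+1;1-p)=p+\sum_{k=1}^\infty\frac{p(1-p)^k}{\binom{N+k}{k}},$$ so that $\mathrm{Bias}(\hat p_{\mathrm{ml}})=E(\hat p_{\mathrm{ml}})-p=\sum_{k=1}^\infty\frac{p(1-p)^k}{\binom{N+k}{k}}$ and $\mathrm{Bias}(\hat p_{\mathrm b})=-\frac pN+\frac{N-1}{N}\sum_{k=1}^\infty\frac{p(1-p)^k}{\binom{N+k}{k}}$.
   Context: Model: $X_{ij}$, $i=1,\dots,m$, $j=1,\dots,n_i$, are iid with probability mass function $P(X_{ij}=x)=p(1-p)^{x-a}$, $x=a,a+1,\dots$, $a$ a known integer; $N=\sum_i n_i$, $\bar{\bar X}=\frac1N\sum_{i,j}X_{ij}$. ${}_2F_1(a,b;c;z)=\sum_{k\ge0}\frac{(a)_k(b)_k}{(c)_k}\frac{z^k}{k!}$ with Pochhammer symbol $(x)_k=x(x+1)\cdots(x+k-1)$, $(x)_0=1$. *)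

theory Defs
  imports "HOL-Probability.Probability"
begin

definition hyp2F1 :: "real \<Rightarrow> real \<Rightarrow> real \<Rightarrow> real \<Rightarrow> real" where
  "hyp2F1 a b c z = (\<Sum>k. pochhammer a k * pochhammer b k / pochhammer c k * z ^ k / fact k)"

definition shifted_geom_pmf :: "int \<Rightarrow> real \<Rightarrow> int pmf" where
  "shifted_geom_pmf a p = map_pmf (\<lambda>y. a + int y) (geometric_pmf p)"

definition obs_index :: "nat \<Rightarrow> (nat \<Rightarrow> nat) \<Rightarrow> (nat \<times> nat) set" where
  "obs_index m n = {(i, j). i < m \<and> j < n i}"

definition sample_pmf :: "nat \<Rightarrow> (nat \<Rightarrow> nat) \<Rightarrow> int \<Rightarrow> real \<Rightarrow> (nat \<times> nat \<Rightarrow> int) pmf" where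
  "sample_pmf m n a p = Pi_pmf (obs_index m n) 0 (\<lambda>_. shifted_geom_pmf a p)"

definition grand_mean :: "nat \<Rightarrow> (nat \<Rightarrow> nat) \<Rightarrow> (nat \<times> nat \<Rightarrow> int) \<Rightarrow> real" where
  "grand_mean m n X = (1 / real (\<Sum>i<m. n i)) * (\<Sum>ij\<in>obs_index m n. real_of_int (X ij))"

definition p_ml :: "nat \<Rightarrow> (nat \<Rightarrow> nat) \<Rightarrow> int \<Rightarrow> (nat \<times> nat \<Rightarrow> int) \<Rightarrow> real" where
  "p_ml m n a X = 1 / (grand_mean m n X - real_of_int a + 1)"

definition p_b :: "nat \<Rightarrow> (nat \<Rightarrow> nat) \<Rightarrow> int \<Rightarrow> (nat \<times> nat \<Rightarrow> int) \<Rightarrow> real" where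
  "p_b m n a X = (real (\<Sum>i<m. n i) - 1) / real (\<Sum>i<m. n i) * p_ml m n a X"

end

theory Submission
  imports Defs
begin


lemma pmf_add_pair:
  fixes P Q :: "nat pmf"
  shows "pmf (map_pmf (\<lambda>(u,v). u+v) (pair_pmf P Q)) s = (\<Sum>j\<le>s. pmf P j * pmf Q (s-j))"
proof -
  have e: "(\<lambda>(u,v). u+v) -` {s} = (\<lambda>j. (j, s-j)) ` {..s}" by force
  have "pmf (map_pmf (\<lambda>(u,v). u+v) (pair_pmf P Q)) s = measure (pair_pmf P Q) ((\<lambda>j. (j, s-j)) ` {..s})"
    by (simp add: pmf_map e)
  also have "\<dots> = sum (pmf (pair_pmf P Q)) ((\<lambda>j. (j, s-j)) ` {..s})"
    by (rule measure_measure_pmf_finite) simp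
  also have "\<dots> = (\<Sum>j\<le>s. pmf P j * pmf Q (s-j))"
    by (subst sum.reindex) (auto simp: inj_on_def pmf_pair)
  finally show ?thesis .
qed

lemma hockey_nat: "(\<Sum>i\<le>s. (k+i-1 choose i)) = (k+s choose s)"
proof (induction s)
  case 0 then show ?case by simp
next
  case (Suc s)
  have "k + Suc s - 1 = k + s" by simp
  then show ?case using Suc by (simp add: binomial_Suc_Suc)
qed

lemma negbin:
  fixes M :: "'b pmf" and h :: "'b \<Rightarrow> nat"
  assumes "finite I" "0 < p" "p < 1" "map_pmf h M = geometric_pmf p"
  shows "pmf (map_pmf (\<lambda>X. \<Sum>i\<in>I. h (X i)) (Pi_pmf I d (\<lambda>_. M))) s
          = real ((card I + s - 1) choose s) * p ^ card I * (1-p) ^ s"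
  using assms(1)
proof (induction I arbitrary: s rule: finite_induct)
  case empty
  then show ?case by (cases s) (auto simp: indicator_def)
next
  case (insert x A)
  let ?S = "\<lambda>X. \<Sum>i\<in>A. h (X i)"
  have "map_pmf (\<lambda>X. \<Sum>i\<in>insert x A. h (X i)) (Pi_pmf (insert x A) d (\<lambda>_. M))
      = map_pmf (\<lambda>(u,v). u+v) (map_pmf (\<lambda>(a, b). (h a, ?S b)) (pair_pmf M (Pi_pmf A d (\<lambda>_. M))))"
    using insert by (simp add: Pi_pmf_insert map_pmf_comp case_prod_beta')
         (intro map_pmf_cong refl, auto intro!: sum.cong)
  also have "\<dots> = map_pmf (\<lambda>(u,v). u+v) (pair_pmf (geometric_pmf p) (map_pmf ?S (Pi_pmf A d (\<lambda>_. M))))"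
    by (simp add: map_pair assms(4))
  finally have eq: "pmf (map_pmf (\<lambda>X. \<Sum>i\<in>insert x A. h (X i)) (Pi_pmf (insert x A) d (\<lambda>_. M))) s
     = (\<Sum>j\<le>s. ((1-p)^j * p) * (real ((card A + (s-j) - 1) choose (s-j)) * p ^ card A * (1-p) ^ (s-j)))"
    using assms by (simp add: pmf_add_pair insert.IH)
  also have "\<dots> = (\<Sum>j\<le>s. real ((card A + (s-j) - 1) choose (s-j))) * p ^ Suc (card A) * (1-p)^s"
    unfolding sum_distrib_right
    by (intro sum.cong refl) (auto simp: power_add[symmetric] algebra_simps)
  also have "(\<Sum>j\<le>s. real ((card A + (s-j) - 1) choose (s-j))) = (\<Sum>i\<le>s. real ((card A + i - 1) choose i))"
    by (rule sum.reindex_bij_witness[of _ "\<lambda>i. s - i" "\<lambda>i. s - i"]) auto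
  also have "\<dots> = real (card A + s choose s)"
    using hockey_nat[where s=s and k="card A"] by (simp flip: of_nat_sum)
  finally show ?case using insert by simp
qed


lemma comb_rec:
  fixes N :: nat assumes N: "N \<ge> 2"
  defines "b \<equiv> \<lambda>k. 1 / real (N+k choose k)" and "c \<equiv> \<lambda>j. real (N-2+j choose j)"
  shows "(real N + real s) * (\<Sum>k\<le>s. b k * c (s-k)) = real N * real (N+s-1 choose s)"
proof (induction s)
  case 0 then show ?case by (simp add: b_def c_def)
next
  case (Suc s)
  have hb: "(real N + real k + 1) * b (Suc k) = (real k + 1) * b k" for k
  proof -
    have "real (Suc k) * real (Suc (N+k) choose Suc k) = real (Suc (N+k)) * real (N+k choose k)"
      by (simp only: of_nat_mult[symmetric]) (metis Suc_times_binomial_eq mult.commute)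
    moreover have "real (N+k choose k) > 0" "real (Suc (N+k) choose Suc k) > 0" by (simp_all del: binomial_Suc_Suc)
    ultimately show ?thesis unfolding b_def
      by (simp add: field_simps)
  qed
  have hc: "(real j + 1) * c (Suc j) = (real N + real j - 1) * c j" for j
  proof -
    have "real (Suc j) * real (Suc (N-2+j) choose Suc j) = real (Suc (N-2+j)) * real (N-2+j choose j)"
      by (simp only: of_nat_mult[symmetric]) (metis Suc_times_binomial_eq mult.commute)
    moreover have "real (Suc (N-2+j)) = real N + real j - 1" using N by simp
    moreover have "N - 2 + Suc j = Suc (N-2+j)" using N by simp
    ultimately show ?thesis unfolding c_def by (simp add: algebra_simps)
  qed
  have "(real N + real (Suc s)) * (\<Sum>k\<le>Suc s. b k * c (Suc s-k))
     = (\<Sum>k\<le>Suc s. (real N + real k) * b k * c (Suc s - k)) + (\<Sum>k\<le>Suc s. b k * (real (Suc s - k) * c (Suc s - k)))"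
    by (simp add: sum_distrib_left sum.distrib[symmetric] algebra_simps of_nat_diff)
  also have "(\<Sum>k\<le>Suc s. (real N + real k) * b k * c (Suc s - k))
     = real N * c (Suc s) + (\<Sum>k\<le>s. (real k + 1) * b k * c (s - k))"
  proof -
    have "(\<Sum>k\<le>Suc s. (real N + real k) * b k * c (Suc s - k))
       = (real N + real 0) * b 0 * c (Suc s - 0) + (\<Sum>k\<le>s. (real N + real (Suc k)) * b (Suc k) * c (Suc s - Suc k))"
      by (rule sum.atMost_Suc_shift)
    also have "(\<Sum>k\<le>s. (real N + real (Suc k)) * b (Suc k) * c (Suc s - Suc k)) = (\<Sum>k\<le>s. (real k + 1) * b k * c (s - k))"
    proof (intro sum.cong refl)
      fix k assume "k \<in> {..s}"
      have "(real N + real (Suc k)) * b (Suc k) * c (Suc s - Suc k) = ((real N + real k + 1) * b (Suc k)) * c (s - k)"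
        by (simp add: algebra_simps)
      also have "\<dots> = (real k + 1) * b k * c (s - k)" by (simp only: hb)
      finally show "(real N + real (Suc k)) * b (Suc k) * c (Suc s - Suc k) = (real k + 1) * b k * c (s - k)" .
    qed
    finally show ?thesis by (simp add: b_def)
  qed
  also have "(\<Sum>k\<le>Suc s. b k * (real (Suc s - k) * c (Suc s - k)))
     = (\<Sum>k\<le>s. b k * ((real N + real (s - k) - 1) * c (s - k)))"
  proof -
    have "(\<Sum>k\<le>Suc s. b k * (real (Suc s - k) * c (Suc s - k))) = (\<Sum>k\<le>s. b k * (real (Suc s - k) * c (Suc s - k)))"
      by (simp add: sum.atMost_Suc)
    also have "\<dots> = (\<Sum>k\<le>s. b k * ((real N + real (s - k) - 1) * c (s - k)))"
    proof (intro sum.cong refl)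
      fix k assume "k \<in> {..s}"
      then have "Suc s - k = Suc (s - k)" by auto
      moreover have "real (Suc (s - k)) = real (s-k) + 1" by simp
      ultimately show "b k * (real (Suc s - k) * c (Suc s - k)) = b k * ((real N + real (s - k) - 1) * c (s - k))"
        using hc[of "s-k"] by (simp only:)
    qed
    finally show ?thesis .
  qed
  also have "real N * c (Suc s) + (\<Sum>k\<le>s. (real k + 1) * b k * c (s - k)) + (\<Sum>k\<le>s. b k * ((real N + real (s - k) - 1) * c (s - k)))
     = real N * c (Suc s) + (real N + real s) * (\<Sum>k\<le>s. b k * c (s-k))"
    by (simp add: sum_distrib_left sum.distrib[symmetric] algebra_simps of_nat_diff)
  also have "\<dots> = real N * (c (Suc s) + real (N+s-1 choose s))" using Suc by (simp add: algebra_simps)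
  also have "c (Suc s) + real (N+s-1 choose s) = real (N + Suc s - 1 choose Suc s)"
  proof -
    define M where "M = N + s - 1"
    have e: "N + Suc s - 1 = Suc M" "N - 2 + Suc s = M" "N + s - 1 = M" using N by (auto simp: M_def)
    have "real (Suc M choose Suc s) = real (M choose s) + real (M choose Suc s)"
      by (simp only: binomial_Suc_Suc of_nat_add)
    then show ?thesis unfolding c_def e by simp
  qed
  finally show ?case .
qed


lemma poch_binom: "pochhammer (real N + 1) k = fact k * real (N+k choose k)"
proof (induction k)
  case 0 then show ?case by simp
next
  case (Suc k)
  have "real (Suc k) * real (Suc (N+k) choose Suc k) = real (Suc (N+k)) * real (N+k choose k)"
    by (simp only: of_nat_mult[symmetric]) (metis Suc_times_binomial_eq mult.commute)
  have "pochhammer (real N + 1) (Suc k) = fact k * (real (Suc (N+k)) * real (N+k choose k))"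
    using Suc by (simp add: pochhammer_Suc algebra_simps del: binomial_Suc_Suc)
  also have "\<dots> = fact k * (real (Suc k) * real (Suc (N+k) choose Suc k))"
    by (simp only: \<open>real (Suc k) * _ = _\<close>)
  also have "\<dots> = fact (Suc k) * real (N + Suc k choose Suc k)"
    by (simp del: binomial_Suc_Suc)
  finally show ?case .
qed

lemma expect_nat:
  fixes M :: "nat pmf" and f :: "nat \<Rightarrow> real"
  assumes "summable (\<lambda>s. norm (pmf M s * f s))"
  shows "measure_pmf.expectation M f = (\<Sum>s. pmf M s * f s)"
proof -
  have "measure_pmf.expectation M f = (\<integral>n. pmf M n * f n \<partial>count_space UNIV)"
    unfolding measure_pmf_eq_density by (subst integral_density) auto
  also have "\<dots> = (\<Sum>s. pmf M s * f s)"
    using assms by (intro integral_count_space_nat) (simp add: integrable_count_space_nat_iff)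
  finally show ?thesis .
qed

lemma pmf_sums_one:
  fixes M :: "nat pmf"
  shows "pmf M sums 1"
proof -
  have s: "summable (pmf M)"
    using integrable_pmf[of UNIV M] by (simp add: integrable_count_space_nat_iff)
  have "(\<Sum>s. pmf M s) = (\<integral>x. pmf M x \<partial>count_space UNIV)"
    using integrable_pmf[of UNIV M] by (simp add: integral_count_space_nat)
  also have "\<dots> = 1" by (simp add: integral_pmf)
  finally show ?thesis using s by (simp add: sums_iff)
qed


theorem mainTheorem4:
  fixes m :: nat and n :: "nat \<Rightarrow> nat" and a :: int and p :: real and N :: nat
  assumes "N = (\<Sum>i<m. n i)" and "N \<ge> 2" and "0 < p" and "p < 1"
  shows "(measure_pmf.expectation (sample_pmf m n a p) (p_ml m n a)
           = p * hyp2F1 1 1 (real N + 1) (1 - p)) \<and>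
         (measure_pmf.expectation (sample_pmf m n a p) (p_ml m n a)
           = p + (\<Sum>k. p * (1 - p) ^ (k + 1) / real ((N + (k + 1)) choose (k + 1)))) \<and>
         (measure_pmf.expectation (sample_pmf m n a p) (p_ml m n a) - p
           = (\<Sum>k. p * (1 - p) ^ (k + 1) / real ((N + (k + 1)) choose (k + 1)))) \<and>
         (measure_pmf.expectation (sample_pmf m n a p) (p_b m n a) - p
           = - p / real N + (real N - 1) / real N *
               (\<Sum>k. p * (1 - p) ^ (k + 1) / real ((N + (k + 1)) choose (k + 1))))"
proof -
  note NN = assms(1) and N2 = assms(2) and p0 = assms(3) and p1 = assms(4)
  define I where "I = obs_index m n"
  have I_eq: "I = Sigma {..<m} (\<lambda>i. {..<n i})" by (auto simp: I_def obs_index_def)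
  have finI: "finite I" by (simp add: I_eq)
  have cardI: "card I = N" using NN by (simp add: I_eq)
  have Npos: "real N > 0" using N2 by simp
  define S where "S = (\<lambda>X. \<Sum>ij\<in>I. nat (X ij - a))"
  define g where "g = (\<lambda>s::nat. real N / (real N + real s))"
  define NB where "NB = map_pmf S (sample_pmf m n a p)"
  have hmap: "map_pmf (\<lambda>x. nat (x - a)) (shifted_geom_pmf a p) = geometric_pmf p"
    by (simp add: shifted_geom_pmf_def map_pmf_comp)
  have pmfNB: "pmf NB s = real ((N + s - 1) choose s) * p ^ N * (1-p) ^ s" for s
    unfolding NB_def S_def sample_pmf_def I_def[symmetric]
    using negbin[OF finI p0 p1 hmap, of 0 s] cardI by simp
  have pw: "p_ml m n a X = g (S X)" if X: "X \<in> set_pmf (sample_pmf m n a p)" for X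
  proof -
    have "X \<in> PiE_dflt I 0 (set_pmf \<circ> (\<lambda>_. shifted_geom_pmf a p))"
      using X finI by (simp add: sample_pmf_def I_def[symmetric] set_Pi_pmf)
    then have ge: "X ij \<ge> a" if "ij \<in> I" for ij
      using that by (cases ij) (force simp: PiE_dflt_def shifted_geom_pmf_def)
    have "(\<Sum>ij\<in>I. real_of_int (X ij)) = (\<Sum>ij\<in>I. real_of_int a + real (nat (X ij - a)))"
      using ge by (intro sum.cong refl) simp
    also have "\<dots> = real N * real_of_int a + real (S X)"
      by (simp add: sum.distrib cardI S_def)
    finally have sx: "(\<Sum>ij\<in>I. real_of_int (X ij)) = real N * real_of_int a + real (S X)" .
    have "p_ml m n a X = 1 / ((real N * real_of_int a + real (S X)) / real N - real_of_int a + 1)"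
      unfolding p_ml_def grand_mean_def using sx NN by (simp add: I_def)
    also have "\<dots> = g (S X)" using Npos unfolding g_def by (simp add: field_simps)
    finally show ?thesis .
  qed
  have Eml: "measure_pmf.expectation (sample_pmf m n a p) (p_ml m n a) = measure_pmf.expectation NB g"
    unfolding NB_def integral_map_pmf
    by (intro integral_cong_AE) (auto simp: AE_measure_pmf_iff pw)
  define x where "x = (\<lambda>k::nat. p * (1 - p) ^ k / real (N + k choose k))"
  define NB' where "NB' = map_pmf (\<lambda>X. \<Sum>i\<in>{..<N-1}. X i) (Pi_pmf {..<N-1} (0::nat) (\<lambda>_. geometric_pmf p))"
  have pmfNB': "pmf NB' j = real ((N - 2 + j) choose j) * p ^ (N-1) * (1-p) ^ j" for j
  proof -
    have "pmf NB' j = real ((card {..<N-1} + j - 1) choose j) * p ^ card {..<N-1} * (1-p) ^ j"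
      unfolding NB'_def using negbin[of "{..<N-1}" p "\<lambda>x. x" "geometric_pmf p" 0 j] p0 p1 by simp
    moreover have "card {..<N-1} + j - 1 = N - 2 + j" using N2 by simp
    ultimately show ?thesis by simp
  qed
  have x_nonneg: "x k \<ge> 0" for k using p0 p1 by (simp add: x_def)
  have x_le: "x k \<le> p * (1-p)^k" for k
  proof -
    have "real (N + k choose k) \<ge> 1" by (simp add: Suc_leI)
    moreover have "p * (1-p)^k \<ge> 0" using p0 p1 by simp
    ultimately have "p * (1-p)^k / real (N + k choose k) \<le> p * (1-p)^k / 1"
      by (intro divide_left_mono) auto
    then show ?thesis unfolding x_def by simp
  qed
  have sumx: "summable (\<lambda>k. norm (x k))"
  proof (rule summable_comparison_test)
    show "\<exists>N0. \<forall>k\<ge>N0. norm (norm (x k)) \<le> p * (1-p)^k" using x_nonneg x_le by auto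
    show "summable (\<lambda>k. p * (1-p)^k)" using p0 p1 by (intro summable_mult summable_geometric) simp
  qed
  have sumy: "summable (\<lambda>k. norm (pmf NB' k))"
    using pmf_sums_one[of NB'] by (simp add: sums_iff)
  have y1: "(\<Sum>k. pmf NB' k) = 1" using pmf_sums_one[of NB'] by (simp add: sums_iff)
  have termeq: "pmf NB s * g s = (\<Sum>k\<le>s. x k * pmf NB' (s - k))" for s
  proof -
    define b where "b = (\<lambda>k. 1 / real (N+k choose k))"
    define c where "c = (\<lambda>j. real (N-2+j choose j))"
    have cr: "(real N + real s) * (\<Sum>k\<le>s. b k * c (s-k)) = real N * real (N+s-1 choose s)"
      unfolding b_def c_def by (rule comb_rec[OF N2])
    have "(\<Sum>k\<le>s. x k * pmf NB' (s - k)) = (\<Sum>k\<le>s. p ^ N * (1-p) ^ s * (b k * c (s-k)))"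
    proof (intro sum.cong refl)
      fix k assume "k \<in> {..s}"
      then have ks: "k + (s - k) = s" by simp
      have pp: "p * p ^ (N-1) = p ^ N" using N2 by (simp add: power_eq_if)
      have "x k * pmf NB' (s - k) = (p * p ^ (N-1)) * ((1-p)^k * (1-p)^(s-k)) * (b k * c (s-k))"
        by (simp add: x_def pmfNB' b_def c_def)
      also have "\<dots> = p ^ N * (1-p) ^ s * (b k * c (s-k))"
        by (simp only: pp power_add[symmetric] ks)
      finally show "x k * pmf NB' (s - k) = p ^ N * (1-p) ^ s * (b k * c (s-k))" .
    qed
    also have "\<dots> = p ^ N * (1-p) ^ s * (\<Sum>k\<le>s. b k * c (s-k))" by (simp add: sum_distrib_left)
    also have "(\<Sum>k\<le>s. b k * c (s-k)) = real N * real (N+s-1 choose s) / (real N + real s)"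
      using cr Npos by (simp add: field_simps)
    finally show ?thesis by (simp add: pmfNB g_def)
  qed
  have sNB: "(\<lambda>s. pmf NB s * g s) sums ((\<Sum>k. x k) * 1)"
    using Cauchy_product_sums[OF sumx sumy] unfolding y1 termeq .
  have sumNB: "summable (\<lambda>s. norm (pmf NB s * g s))"
    using sNB Npos by (simp add: sums_iff g_def)
  have E1: "measure_pmf.expectation (sample_pmf m n a p) (p_ml m n a) = (\<Sum>k. x k)"
    using Eml expect_nat[OF sumNB] sNB by (simp add: sums_iff)
  have sx: "summable x" using sumx x_nonneg by (simp add: abs_of_nonneg)
  have x0: "x 0 = p" by (simp add: x_def)
  have split: "(\<Sum>k. x k) = p + (\<Sum>k. p * (1 - p) ^ (k + 1) / real ((N + (k + 1)) choose (k + 1)))"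
    using suminf_split_head[OF sx] x0 by (simp add: x_def)
  have hyp: "p * hyp2F1 1 1 (real N + 1) (1 - p) = (\<Sum>k. x k)"
  proof -
    have "(\<lambda>k. x k / p) sums ((\<Sum>k. x k) / p)" by (intro sums_divide summable_sums sx)
    moreover have "(\<lambda>k. x k / p) = (\<lambda>k. pochhammer 1 k * pochhammer 1 k / pochhammer (real N + 1) k * (1 - p) ^ k / fact k)"
    proof
      fix k
      have f: "(fact k :: real) > 0" by simp
      show "x k / p = pochhammer 1 k * pochhammer 1 k / pochhammer (real N + 1) k * (1 - p) ^ k / fact k"
        using p0 f unfolding x_def poch_binom pochhammer_fact[symmetric] by (simp add: field_simps)
    qed
    ultimately have "hyp2F1 1 1 (real N + 1) (1 - p) = (\<Sum>k. x k) / p"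
      unfolding hyp2F1_def by (simp add: sums_iff)
    then show ?thesis using p0 by simp
  qed
  have Eb: "measure_pmf.expectation (sample_pmf m n a p) (p_b m n a) = (real N - 1) / real N * (\<Sum>k. x k)"
    unfolding p_b_def NN[symmetric] using E1 by simp
  have key: "\<And>T. (real N - 1) / real N * (p + T) - p = - p / real N + (real N - 1) / real N * T"
    using Npos by (simp add: field_simps)
  show ?thesis
  proof (intro conjI)
    show "measure_pmf.expectation (sample_pmf m n a p) (p_ml m n a) = p * hyp2F1 1 1 (real N + 1) (1 - p)"
      using E1 hyp by simp
    show "measure_pmf.expectation (sample_pmf m n a p) (p_ml m n a)
           = p + (\<Sum>k. p * (1 - p) ^ (k + 1) / real ((N + (k + 1)) choose (k + 1)))"
      by (subst E1, rule split)
    show "measure_pmf.expectation (sample_pmf m n a p) (p_ml m n a) - p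
           = (\<Sum>k. p * (1 - p) ^ (k + 1) / real ((N + (k + 1)) choose (k + 1)))"
      by (subst E1, subst split) simp
    show "measure_pmf.expectation (sample_pmf m n a p) (p_b m n a) - p
           = - p / real N + (real N - 1) / real N *
               (\<Sum>k. p * (1 - p) ^ (k + 1) / real ((N + (k + 1)) choose (k + 1)))"
      by (subst Eb, subst split, rule key)
  qed
qed

end
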